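(* Let $C>1$ and let $P$ be a probability measure on $[0,\infty)$. Consider the equation $G_{P,C}(\mu)=0$, $\mu\ge0$. (1) If $\mathbb{P}_{t\sim P}[t=0]<1-\frac1C$, the equation has exactly two solutions, namely $0$ and $\mu_{P,C}>0$. (2) If $\mathbb{P}_{t\sim P}[t=0]=1-\frac1C$, then $G_{P,C}(\mu)=0$ for all $0\le\mu\le\frac1Cm_P$, and $\mu_{P,C}=\frac1Cm_P$. (3) If $\mathbb{P}_{t\sim P}[t=0]>1-\frac1C$, the only solution is $0$, so $\mu_{P,C}=0$.
   Context: For $\mu\ge0$ define $G_{P,C}(\mu):=\mathbb{E}_{t\sim P}[\min\{t,C\mu\}]-\mu$. The $C$-clipped mean $\mu_{P,C}$ is the largest $\mu\ge0$ with $G_{P,C}(\mu)=0$. The $\frac1C$-median is $m_P:=\sup\{M\ge0:\mathbb{P}_{t\sim P}[t\ge M]\ge\frac1C\}$. *)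

theory Defs
  imports "HOL-Probability.Probability"
begin

text \<open>P is a probability measure on the reals (Borel sets) concentrated on [0,\<infinity>).\<close>

definition G_clip :: "real measure \<Rightarrow> real \<Rightarrow> real \<Rightarrow> real" where
  "G_clip P C \<mu> = (\<integral>t. min t (C * \<mu>) \<partial>P) - \<mu>"

definition clipped_mean :: "real measure \<Rightarrow> real \<Rightarrow> real" where
  "clipped_mean P C = (GREATEST \<mu>. \<mu> \<ge> 0 \<and> G_clip P C \<mu> = 0)"

definition inv_C_median :: "real measure \<Rightarrow> real \<Rightarrow> real" where
  "inv_C_median P C = Sup {M. M \<ge> 0 \<and> measure P {M..} \<ge> 1 / C}"

end

theory Submission imports Defs begin

locale clipsetup = prob_space P for P :: "real measure" +
  fixes C :: real
  assumes C1: "C > 1" and SB: "sets P = sets borel" and NN: "AE t in P. t \<ge> 0"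
begin

lemma space_eq: "space P = UNIV" using sets_eq_imp_space_eq[OF SB] by simp

lemma meas_id[measurable]: "(\<lambda>x. x) \<in> borel_measurable P"
  using measurable_ident_sets[OF SB] .

lemma sets_P[measurable]: "{a<..} \<in> sets P" "{a..} \<in> sets P" "{a<..<b} \<in> sets P" "{a} \<in> sets P"
  "{..<a} \<in> sets P"
  by (simp_all add: SB)

definition f :: "real \<Rightarrow> real" where "f \<mu> = (\<integral>t. min t (C * \<mu>) \<partial>P)"

lemma G_eq: "G_clip P C \<mu> = f \<mu> - \<mu>" by (simp add: G_clip_def f_def)

lemma int_min: "integrable P (\<lambda>t. min t c)"
proof (rule integrable_const_bound[where B="\<bar>c\<bar>"])
  show "AE x in P. norm (min x c) \<le> \<bar>c\<bar>" using NN by eventually_elim auto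
qed measurable

lemma int_ind: "integrable P (\<lambda>t. c * indicator A t)" if "A \<in> sets P" for c :: real and A
  apply (rule integrable_const_bound[where B="\<bar>c\<bar>"])
  using that by (auto simp: indicator_def)

lemma int_ind1: "A \<in> sets P \<Longrightarrow> integrable P (indicator A :: real \<Rightarrow> real)"
  using int_ind[where c=1 and A=A] by simp

lemma AE_null: "S \<in> sets P \<Longrightarrow> (AE t in P. t \<notin> S) \<longleftrightarrow> measure P S = 0"
  by (subst AE_iff_measurable[where N=S]) (auto simp: space_eq emeasure_eq_measure)

lemma q_rel: "measure P {0} = 1 - measure P {0<..}"
proof -
  have n: "measure P {..<0} = 0" using NN AE_null[of "{..<0}"] by (auto simp: not_less)
  have "UNIV = {..<0} \<union> ({0} \<union> {0::real<..})" by auto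
  then have "1 = measure P ({..<0} \<union> ({0} \<union> {0::real<..}))" using prob_space space_eq by simp
  also have "\<dots> = measure P {..<0} + measure P ({0} \<union> {0::real<..})"
    by (rule finite_measure_Union) (auto intro!: sets.Un simp: SB)
  also have "measure P ({0} \<union> {0::real<..}) = measure P {0} + measure P {0<..}"
    by (rule finite_measure_Union) (auto simp: SB)
  finally show ?thesis using n by simp
qed

lemma f0: "f 0 = 0"
proof -
  have "f 0 = (\<integral>t. 0 \<partial>P)" unfolding f_def
    by (rule integral_cong_AE) (use NN in \<open>auto elim: eventually_mono\<close>)
  then show ?thesis by simp
qed

lemma f_lip: "\<bar>f a - f b\<bar> \<le> C * \<bar>a - b\<bar>"
proof -
  have pw: "\<bar>min t (C*a) - min t (C*b)\<bar> \<le> C * \<bar>a - b\<bar>" for t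
  proof -
    have "\<bar>C*a - C*b\<bar> = C * \<bar>a - b\<bar>" using C1 by (simp add: abs_mult flip: right_diff_distrib)
    then show ?thesis by (auto simp: min_def)
  qed
  have "f a - f b = (\<integral>t. min t (C*a) - min t (C*b) \<partial>P)"
    unfolding f_def by (rule Bochner_Integration.integral_diff[OF int_min int_min, symmetric])
  also have "\<bar>\<dots>\<bar> \<le> (\<integral>t. \<bar>min t (C*a) - min t (C*b)\<bar> \<partial>P)"
    by (rule integral_abs_bound)
  also have "\<dots> \<le> (\<integral>t. C * \<bar>a - b\<bar> \<partial>P)"
    by (rule integral_mono) (auto intro!: int_min integrable_abs Bochner_Integration.integrable_diff pw)
  also have "\<dots> = C * \<bar>a - b\<bar>" by (simp add: prob_space)
  finally show ?thesis .
qed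

lemma G_cont: "continuous_on S (\<lambda>\<mu>. G_clip P C \<mu>)"
proof -
  have "(C+1)-lipschitz_on S (\<lambda>\<mu>. G_clip P C \<mu>)"
  proof (rule lipschitz_onI)
    fix x y assume "x \<in> S" "y \<in> S"
    have "\<bar>f x - x - (f y - y)\<bar> \<le> \<bar>f x - f y\<bar> + \<bar>x - y\<bar>" by linarith
    also have "\<dots> \<le> (C+1) * \<bar>x - y\<bar>" using f_lip[of x y] by (simp add: distrib_right)
    finally show "dist (G_clip P C x) (G_clip P C y) \<le> (C + 1) * dist x y"
      by (simp add: G_eq dist_real_def)
  qed (use C1 in auto)
  then show ?thesis by (rule lipschitz_on_continuous_on)
qed

lemma f_concave:
  assumes "0 \<le> l" "l \<le> 1"
  shows "l * f x + (1-l) * f y \<le> f (l*x + (1-l)*y)"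
proof -
  have pw: "l * min t (C*x) + (1-l) * min t (C*y) \<le> min t (C*(l*x+(1-l)*y))" for t
  proof -
    have a: "l * min t (C*x) \<le> l*t" "l * min t (C*x) \<le> l*(C*x)" using assms by (auto intro: mult_left_mono)
    have b: "(1-l) * min t (C*y) \<le> (1-l)*t" "(1-l) * min t (C*y) \<le> (1-l)*(C*y)" using assms by (auto intro: mult_left_mono)
    have "l*t + (1-l)*t = t" by (simp add: algebra_simps)
    moreover have "l*(C*x) + (1-l)*(C*y) = C*(l*x+(1-l)*y)" by algebra
    ultimately show ?thesis using a b by linarith
  qed
  have "l * f x + (1-l) * f y = (\<integral>t. l * min t (C*x) + (1-l) * min t (C*y) \<partial>P)"
    unfolding f_def by (simp add: int_min)
  also have "\<dots> \<le> f (l*x + (1-l)*y)" unfolding f_def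
    by (rule integral_mono[OF _ _ pw]) (auto intro!: int_min)
  finally show ?thesis .
qed

lemma G_concave:
  assumes "0 \<le> l" "l \<le> 1"
  shows "l * G_clip P C x + (1-l) * G_clip P C y \<le> G_clip P C (l*x + (1-l)*y)"
  using f_concave[OF assms, of x y] by (simp add: G_eq algebra_simps)

lemma f_upper: "\<mu> \<ge> 0 \<Longrightarrow> f \<mu> \<le> C * \<mu> * measure P {0<..}"
proof -
  assume m: "\<mu> \<ge> 0"
  have "f \<mu> \<le> (\<integral>t. C * \<mu> * indicator {0<..} t \<partial>P)" unfolding f_def
  proof (rule integral_mono_AE)
    show "AE t in P. min t (C * \<mu>) \<le> C * \<mu> * indicator {0<..} t"
      using NN by eventually_elim (auto simp: indicator_def)
  qed (auto intro!: int_min int_ind1)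
  also have "\<dots> = C * \<mu> * measure P {0<..}"
    using int_ind1[OF sets_P(1)] by (simp add: space_eq)
  finally show ?thesis .
qed

lemma G0: "G_clip P C 0 = 0" by (simp add: G_eq f0)

lemma small_pos:
  assumes "C * measure P {0<..} > 1"
  shows "\<exists>x0>0. G_clip P C x0 > 0"
proof -
  define s where "s n t = real (Suc n) * min t (C / real (Suc n))" for n t
  define g where "g t = C * indicator {0<..} t" for t :: real
  have lim: "(\<lambda>n. \<integral>t. s n t \<partial>P) \<longlonglongrightarrow> (\<integral>t. g t \<partial>P)"
  proof (rule integral_dominated_convergence[where w="\<lambda>_. C"])
    show "AE t in P. (\<lambda>n. s n t) \<longlonglongrightarrow> g t"
      using NN
    proof eventually_elim
      case (elim t)
      show ?case
      proof (cases "t = 0")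
        case True
        then show ?thesis using C1 by (simp add: s_def g_def min_def)
      next
        case False
        with elim have t: "t > 0" by simp
        show ?thesis
        proof (rule tendsto_eventually, rule eventually_sequentiallyI[of "nat \<lceil>C/t\<rceil>"])
          fix n assume "nat \<lceil>C/t\<rceil> \<le> n"
          then have "C / t < real (Suc n)" by linarith
          then have "C < real (Suc n) * t" using t by (simp add: field_simps)
          then have "C / real (Suc n) < t" by (simp add: field_simps)
          then show "s n t = g t" using t by (simp add: s_def g_def min_def)
        qed
      qed
    qed
    fix n
    show "AE t in P. norm (s n t) \<le> C"
      using NN
    proof eventually_elim
      case (elim t)
      have k: "real (Suc n) > 0" by simp
      show ?case
      proof (cases "t \<le> C / real (Suc n)")
        case True
        then have "real (Suc n) * t \<le> C" using k by (simp add: field_simps)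
        then show ?thesis using True elim by (simp add: s_def min_def)
      next
        case False
        then show ?thesis using C1 by (simp add: s_def min_def)
      qed
    qed
  qed (auto simp: s_def g_def)
  have "(\<integral>t. g t \<partial>P) = C * measure P {0<..}"
    using int_ind1[OF sets_P(1)] by (simp add: g_def space_eq)
  with lim assms have "eventually (\<lambda>n. (\<integral>t. s n t \<partial>P) > 1) sequentially"
    by (auto dest: order_tendstoD(1))
  then obtain n where n: "(\<integral>t. s n t \<partial>P) > 1" by (auto simp: eventually_sequentially)
  have "(\<integral>t. s n t \<partial>P) = real (Suc n) * f (1 / real (Suc n))"
    by (simp add: s_def f_def)
  with n have "f (1 / real (Suc n)) > 1 / real (Suc n)"
    by (simp add: field_simps)
  then show ?thesis by (intro exI[of _ "1 / real (Suc n)"]) (simp add: G_eq)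
qed

lemma large_neg: "\<exists>N\<ge>1. G_clip P C N < 0"
proof -
  define s where "s n t = min t (C * real (Suc n)) / real (Suc n)" for n t
  have lim: "(\<lambda>n. \<integral>t. s n t \<partial>P) \<longlonglongrightarrow> (\<integral>t. 0 \<partial>P)"
  proof (rule integral_dominated_convergence[where w="\<lambda>_. C"])
    show "AE t in P. (\<lambda>n. s n t) \<longlonglongrightarrow> 0"
      using NN
    proof eventually_elim
      case (elim t)
      have "(\<lambda>n. t * inverse (real (Suc n))) \<longlonglongrightarrow> t * 0"
        by (intro tendsto_mult tendsto_const LIMSEQ_inverse_real_of_nat)
      then have L: "(\<lambda>n. t * inverse (real (Suc n))) \<longlonglongrightarrow> 0" by simp
      show ?case
      proof (rule Lim_null_comparison[OF _ L], rule always_eventually, rule allI)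
        fix n
        have "0 \<le> min t (C * real (Suc n))" using elim C1 by simp
        moreover have "min t (C * real (Suc n)) \<le> t" by simp
        then have "min t (C * real (Suc n)) / real (Suc n) \<le> t / real (Suc n)"
          by (rule divide_right_mono) simp
        with \<open>0 \<le> min t (C * real (Suc n))\<close>
        show "norm (s n t) \<le> t * inverse (real (Suc n))"
          by (simp add: s_def divide_inverse)
      qed
    qed
    fix n
    show "AE t in P. norm (s n t) \<le> C"
      using NN
    proof eventually_elim
      case (elim t)
      have "0 \<le> min t (C * real (Suc n))" using elim C1 by simp
      moreover have "min t (C * real (Suc n)) \<le> C * real (Suc n)" by simp
      ultimately show ?case
        by (simp add: s_def field_simps)
    qed
  qed (auto simp: s_def)
  then have lim0: "(\<lambda>n. \<integral>t. s n t \<partial>P) \<longlonglongrightarrow> (0::real)" by simp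
  have "eventually (\<lambda>n. (\<integral>t. s n t \<partial>P) < 1) sequentially"
    by (rule order_tendstoD(2)[OF lim0]) simp
  then obtain n where n: "(\<integral>t. s n t \<partial>P) < 1" by (auto simp: eventually_sequentially)
  have "(\<integral>t. s n t \<partial>P) = f (real (Suc n)) / real (Suc n)"
    by (simp add: s_def f_def)
  with n have "f (real (Suc n)) < real (Suc n)"
    by (simp add: field_simps)
  then show ?thesis by (intro exI[of _ "real (Suc n)"]) (simp add: G_eq)
qed

lemma pos_small:
  assumes "0 < x0" "G_clip P C x0 > 0" "0 < e" "e \<le> x0"
  shows "G_clip P C e > 0"
proof -
  define l where "l = e / x0"
  have l: "0 \<le> l" "l \<le> 1" "l > 0" using assms by (auto simp: l_def)
  have "l * G_clip P C x0 + (1-l) * G_clip P C 0 \<le> G_clip P C (l*x0 + (1-l)*0)"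
    by (rule G_concave[OF l(1,2)])
  moreover have "l * x0 = e" using assms by (simp add: l_def)
  moreover have "l * G_clip P C x0 > 0" using l assms by simp
  ultimately show ?thesis by (simp add: G0)
qed

lemma no_two_roots:
  assumes "0 < x0" "G_clip P C x0 > 0" "0 < a" "a < b"
    "G_clip P C a = 0" "G_clip P C b = 0"
  shows False
proof -
  define e where "e = min x0 a / 2"
  have e: "0 < e" "e \<le> x0" "e < a" using assms by (auto simp: e_def)
  have Ge: "G_clip P C e > 0" by (rule pos_small[OF assms(1,2) e(1,2)])
  define l where "l = (b - a) / (b - e)"
  have l: "0 \<le> l" "l \<le> 1" "l > 0" using e assms by (auto simp: l_def)
  have "l * G_clip P C e + (1-l) * G_clip P C b \<le> G_clip P C (l*e + (1-l)*b)"
    by (rule G_concave[OF l(1,2)])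
  moreover have "l*e + (1-l)*b = a"
  proof -
    have "l*e + (1-l)*b = b - l*(b - e)" by (simp add: algebra_simps)
    also have "l*(b-e) = b - a" using e assms by (simp add: l_def)
    finally show ?thesis by simp
  qed
  moreover have "l * G_clip P C e > 0" using l Ge by simp
  ultimately show False using assms by simp
qed

lemma case1:
  assumes "C * measure P {0<..} > 1"
  shows "clipped_mean P C > 0 \<and> {\<mu>. \<mu> \<ge> 0 \<and> G_clip P C \<mu> = 0} = {0, clipped_mean P C}"
proof -
  obtain x0 where x0: "x0 > 0" "G_clip P C x0 > 0" using small_pos[OF assms] by auto
  obtain N where N: "N \<ge> 1" "G_clip P C N < 0" using large_neg by auto
  have "x0 \<le> N"
  proof (rule ccontr)
    assume "\<not> x0 \<le> N"
    then have "G_clip P C N > 0" using pos_small[OF x0, of N] N by auto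
    with N show False by simp
  qed
  then obtain r where r: "x0 \<le> r" "r \<le> N" "G_clip P C r = 0"
    using IVT2'[of "\<lambda>\<mu>. G_clip P C \<mu>" N 0 x0, OF _ _ _ G_cont] x0 N by auto
  have rpos: "r > 0" using r x0 by simp
  have roots: "\<mu> = 0 \<or> \<mu> = r" if "\<mu> \<ge> 0" "G_clip P C \<mu> = 0" for \<mu>
  proof (cases "\<mu> = 0")
    case False
    then have "\<mu> > 0" using that by simp
    show ?thesis
    proof (rule ccontr)
      assume "\<not> (\<mu> = 0 \<or> \<mu> = r)"
      then have "\<mu> < r \<or> r < \<mu>" by auto
      then show False
      proof
        assume "\<mu> < r" then show False using no_two_roots[OF x0 \<open>\<mu> > 0\<close> _ that(2) r(3)] by simp
      next
        assume "r < \<mu>" then show False using no_two_roots[OF x0 rpos _ r(3) that(2)] by simp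
      qed
    qed
  qed simp
  have cm: "clipped_mean P C = r"
    unfolding clipped_mean_def
  proof (rule Greatest_equality)
    show "0 \<le> r \<and> G_clip P C r = 0" using rpos r by simp
    fix y assume "0 \<le> y \<and> G_clip P C y = 0"
    then show "y \<le> r" using roots[of y] rpos by auto
  qed
  show ?thesis using cm rpos roots r(3) G0 by auto
qed

lemma case3:
  assumes "C * measure P {0<..} < 1"
  shows "{\<mu>. \<mu> \<ge> 0 \<and> G_clip P C \<mu> = 0} = {0} \<and> clipped_mean P C = 0"
proof -
  have neg: "G_clip P C \<mu> < 0" if "\<mu> > 0" for \<mu>
  proof -
    have "f \<mu> \<le> C * \<mu> * measure P {0<..}" using f_upper[of \<mu>] that by simp
    also have "\<dots> = \<mu> * (C * measure P {0<..})" by (simp add: algebra_simps)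
    also have "\<dots> < \<mu> * 1" by (rule mult_strict_left_mono[OF assms that])
    finally show ?thesis by (simp add: G_eq)
  qed
  have S: "{\<mu>. \<mu> \<ge> 0 \<and> G_clip P C \<mu> = 0} = {0}"
  proof (intro set_eqI iffI)
    fix x assume x: "x \<in> {\<mu>. \<mu> \<ge> 0 \<and> G_clip P C \<mu> = 0}"
    show "x \<in> {0}"
    proof (cases "x = 0")
      case False
      with x have "x > 0" by simp
      from neg[OF this] x show ?thesis by simp
    qed simp
  next
    fix x assume "x \<in> {0::real}" then show "x \<in> {\<mu>. \<mu> \<ge> 0 \<and> G_clip P C \<mu> = 0}"
      using G0 by simp
  qed
  have "clipped_mean P C = 0" unfolding clipped_mean_def
  proof (rule Greatest_equality)
    show "0 \<le> (0::real) \<and> G_clip P C 0 = 0" using G0 by simp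
    fix y assume "0 \<le> y \<and> G_clip P C y = 0"
    then have "y \<in> {0}" using S by blast
    then show "y \<le> 0" by simp
  qed
  with S show ?thesis by simp
qed

lemma root_iff2:
  assumes hq: "C * measure P {0<..} = 1" and m: "\<mu> \<ge> 0"
  shows "G_clip P C \<mu> = 0 \<longleftrightarrow> (AE t in P. \<not> (0 < t \<and> t < C * \<mu>))"
proof -
  define h where "h t = C * \<mu> * indicator {0<..} t - min t (C * \<mu>)" for t :: real
  have ih: "integrable P h" unfolding h_def
    by (intro Bochner_Integration.integrable_diff int_ind int_min) simp
  have "(\<integral>t. h t \<partial>P) = C * \<mu> * measure P {0<..} - f \<mu>" unfolding h_def f_def
    using int_ind1[OF sets_P(1)]
    by (subst Bochner_Integration.integral_diff) (auto intro: int_min simp: space_eq)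
  also have "C * \<mu> * measure P {0<..} = \<mu>" using hq by (simp add: algebra_simps)
  finally have ih2: "(\<integral>t. h t \<partial>P) = - G_clip P C \<mu>" by (simp add: G_eq)
  have nn: "AE t in P. 0 \<le> h t" using NN
    by eventually_elim (auto simp: h_def indicator_def min_def)
  have E: "AE t in P. (h t = 0) = (\<not> (0 < t \<and> t < C * \<mu>))" using NN
    by eventually_elim (use m C1 in \<open>auto simp: h_def indicator_def min_def\<close>)
  have "G_clip P C \<mu> = 0 \<longleftrightarrow> (\<integral>t. h t \<partial>P) = 0" using ih2 by simp
  also have "\<dots> \<longleftrightarrow> (AE t in P. h t = 0)" by (rule integral_nonneg_eq_0_iff_AE[OF ih nn])
  also have "\<dots> \<longleftrightarrow> (AE t in P. \<not> (0 < t \<and> t < C * \<mu>))"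
  proof
    assume "AE t in P. h t = 0" with E show "AE t in P. \<not> (0 < t \<and> t < C * \<mu>)"
      by eventually_elim auto
  next
    assume "AE t in P. \<not> (0 < t \<and> t < C * \<mu>)" with E show "AE t in P. h t = 0"
      by eventually_elim auto
  qed
  finally show ?thesis .
qed

lemma A_iff:
  assumes hq: "C * measure P {0<..} = 1" and M: "M \<ge> 0"
  shows "measure P {M..} \<ge> 1 / C \<longleftrightarrow> (AE t in P. \<not> (0 < t \<and> t < M))"
proof (cases "M = 0")
  case True
  have "{0::real..} = {0} \<union> {0<..}" by auto
  then have "measure P {0::real..} = measure P ({0} \<union> {0<..})" by simp
  also have "\<dots> = measure P {0} + measure P {0<..}"
    by (rule finite_measure_Union) (auto simp: SB)
  also have "\<dots> = 1" using q_rel by simp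
  finally show ?thesis using True C1 by simp
next
  case False
  then have Mp: "M > 0" using M by simp
  have "{0<..} = {0<..<M} \<union> {M..}" using Mp by auto
  then have "measure P {0<..} = measure P ({0<..<M} \<union> {M..})" by simp
  also have "\<dots> = measure P {0<..<M} + measure P {M..}"
    by (rule finite_measure_Union) (auto simp: SB)
  finally have eq: "measure P {0<..} = measure P {0<..<M} + measure P {M..}" .
  have q: "measure P {0<..} = 1 / C" using hq C1 by (simp add: field_simps)
  have "(AE t in P. \<not> (0 < t \<and> t < M)) \<longleftrightarrow> (AE t in P. t \<notin> {0<..<M})" by simp
  also have "\<dots> \<longleftrightarrow> measure P {0<..<M} = 0" by (rule AE_null) (simp add: SB)
  finally show ?thesis using eq q measure_nonneg[of P "{0<..<M}"] by linarith
qed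

lemma case2:
  assumes hq: "C * measure P {0<..} = 1"
  shows "(\<forall>\<mu>. 0 \<le> \<mu> \<and> \<mu> \<le> inv_C_median P C / C \<longrightarrow> G_clip P C \<mu> = 0) \<and>
            clipped_mean P C = inv_C_median P C / C"
proof -
  define Z where "Z M \<longleftrightarrow> (AE t in P. \<not> (0 < t \<and> t < M))" for M :: real
  define A where "A = {M. M \<ge> 0 \<and> measure P {M..} \<ge> 1 / C}"
  define m where "m = inv_C_median P C"
  have mA: "m = Sup A" by (simp add: m_def A_def inv_C_median_def)
  have Aiff: "M \<in> A \<longleftrightarrow> M \<ge> 0 \<and> Z M" for M
    using A_iff[OF hq, of M] by (auto simp: A_def Z_def)
  have Zmono: "Z M'" if "M' \<le> M" "Z M" for M M'
    using that(2) unfolding Z_def by eventually_elim (use that(1) in auto)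
  obtain n :: nat where n: "\<not> Z (real n)"
  proof (rule ccontr)
    assume "\<not> thesis"
    with that have "\<forall>n::nat. Z (real n)" by blast
    then have "AE t in P. \<forall>n::nat. \<not> (0 < t \<and> t < real n)" unfolding Z_def by (rule AE_all_countable[THEN iffD2])
    then have "AE t in P. t \<notin> {0<..}"
      by eventually_elim (auto, meson reals_Archimedean2)
    then have "measure P {0<..} = 0" by (subst (asm) AE_null) (auto simp: SB)
    with hq show False by simp
  qed
  have A0: "0 \<in> A" using Aiff by (simp add: Z_def)
  have bdd: "bdd_above A"
  proof (rule bdd_aboveI[of _ "real n"])
    fix x assume "x \<in> A"
    then have "Z x" using Aiff by simp
    then show "x \<le> real n" using Zmono[of "real n" x] n by (cases "real n \<le> x") auto
  qed
  have m0: "m \<ge> 0" using cSup_upper[OF A0 bdd] mA by simp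
  have Zm: "Z m"
  proof -
    have "Z (m - 1 / real (Suc k))" for k
    proof -
      have "m - 1 / real (Suc k) < Sup A" using mA by simp
      then obtain x where "x \<in> A" "m - 1 / real (Suc k) < x" using A0 by (auto elim: less_cSupE)
      then show ?thesis using Aiff Zmono[of "m - 1 / real (Suc k)" x] by auto
    qed
    then have "AE t in P. \<forall>k::nat. \<not> (0 < t \<and> t < m - 1 / real (Suc k))"
      unfolding Z_def by (intro AE_all_countable[THEN iffD2] allI)
    then show ?thesis unfolding Z_def
    proof eventually_elim
      case (elim t)
      show ?case
      proof
        assume h: "0 < t \<and> t < m"
        then obtain k where "inverse (real (Suc k)) < m - t" using reals_Archimedean[of "m - t"] by auto
        then have "t < m - 1 / real (Suc k)" by (simp add: inverse_eq_divide)
        with elim h show False by auto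
      qed
    qed
  qed
  have Achar: "M \<in> A \<longleftrightarrow> 0 \<le> M \<and> M \<le> m" for M
  proof
    assume "M \<in> A" then show "0 \<le> M \<and> M \<le> m" using cSup_upper[OF _ bdd] mA Aiff by auto
  next
    assume "0 \<le> M \<and> M \<le> m" then show "M \<in> A" using Aiff Zmono[of M m] Zm by auto
  qed
  have roots: "G_clip P C \<mu> = 0 \<longleftrightarrow> \<mu> \<le> m / C" if "\<mu> \<ge> 0" for \<mu>
  proof -
    have "G_clip P C \<mu> = 0 \<longleftrightarrow> Z (C * \<mu>)" using root_iff2[OF hq that] by (simp add: Z_def)
    also have "\<dots> \<longleftrightarrow> C * \<mu> \<in> A" using Aiff that C1 by simp
    also have "\<dots> \<longleftrightarrow> C * \<mu> \<le> m" using Achar that C1 by simp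
    also have "\<dots> \<longleftrightarrow> \<mu> \<le> m / C" using C1 by (simp add: field_simps)
    finally show ?thesis .
  qed
  have cm: "clipped_mean P C = m / C" unfolding clipped_mean_def
  proof (rule Greatest_equality)
    show "0 \<le> m / C \<and> G_clip P C (m / C) = 0" using roots[of "m / C"] m0 C1 by simp
    fix y assume "0 \<le> y \<and> G_clip P C y = 0" then show "y \<le> m / C" using roots by auto
  qed
  show ?thesis using roots cm by (auto simp: m_def)
qed

end

theorem mainTheorem16:
  fixes P :: "real measure" and C :: real
  assumes "C > 1"
    and "prob_space P"
    and "sets P = sets borel"
    and "AE t in P. t \<ge> 0"
  shows "(measure P {0} < 1 - 1 / C \<longrightarrow>
            clipped_mean P C > 0 \<and>
            {\<mu>. \<mu> \<ge> 0 \<and> G_clip P C \<mu> = 0} = {0, clipped_mean P C})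
       \<and> (measure P {0} = 1 - 1 / C \<longrightarrow>
            (\<forall>\<mu>. 0 \<le> \<mu> \<and> \<mu> \<le> inv_C_median P C / C \<longrightarrow> G_clip P C \<mu> = 0) \<and>
            clipped_mean P C = inv_C_median P C / C)
       \<and> (measure P {0} > 1 - 1 / C \<longrightarrow>
            {\<mu>. \<mu> \<ge> 0 \<and> G_clip P C \<mu> = 0} = {0} \<and> clipped_mean P C = 0)"
proof -
  interpret clipsetup P C
    using assms by (auto simp: clipsetup_def clipsetup_axioms_def)
  have q: "measure P {0} = 1 - measure P {0<..}" by (rule q_rel)
  have Cp: "C > 0" using assms(1) by simp
  have e1: "measure P {0} < 1 - 1 / C \<longleftrightarrow> C * measure P {0<..} > 1"
    using Cp by (simp add: q field_simps)
  have e2: "measure P {0} = 1 - 1 / C \<longleftrightarrow> C * measure P {0<..} = 1"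
    using Cp by (simp add: q field_simps)
  have e3: "measure P {0} > 1 - 1 / C \<longleftrightarrow> C * measure P {0<..} < 1"
    using Cp by (simp add: q field_simps)
  show ?thesis using case1 case2 case3 e1 e2 e3 by blast
qed
end
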